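(* Let $f:2^V\to\mathbb{R}_+$ be nonnegative, normalized ($f(\emptyset)=0$), supermodular and monotone, and let $r,k$ be integers with $1\le r\le k\le n-1$. Run batch-greedy augmenting: $T_0=\emptyset$, $t=\lfloor k/r\rfloor$; for $i=1,\dots,t$, let $\mathcal{R}_i$ be the set of $r$-element subsets of $V\setminus T_{i-1}$, choose $S_i\in\arg\max_{S\in\mathcal{R}_i}f(T_{i-1}\cup S)$ and set $T_i=T_{i-1}\cup S_i$. Then for any $t$ pairwise disjoint $r$-element subsets $U_1,\dots,U_t$ of $V$, $f(T_t)\ge\frac12\sum_{h=1}^t f(U_h)$.
   Context: $V$ is a finite set with $n=|V|$. Supermodular: $f(A)+f(B)\le f(A\cup B)+f(A\cap B)$; monotone: $f(B)\le f(A)$ for $B\subseteq A$. *)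

theory Defs
  imports Complex_Main
begin

definition supermodular_on :: "'a set \<Rightarrow> ('a set \<Rightarrow> real) \<Rightarrow> bool" where
  "supermodular_on V f \<longleftrightarrow>
     (\<forall>A B. A \<subseteq> V \<longrightarrow> B \<subseteq> V \<longrightarrow> f A + f B \<le> f (A \<union> B) + f (A \<inter> B))"

definition monotone_setfun_on :: "'a set \<Rightarrow> ('a set \<Rightarrow> real) \<Rightarrow> bool" where
  "monotone_setfun_on V f \<longleftrightarrow> (\<forall>A B. A \<subseteq> V \<longrightarrow> B \<subseteq> A \<longrightarrow> f B \<le> f A)"

definition r_subsets :: "'a set \<Rightarrow> nat \<Rightarrow> 'a set set" where
  "r_subsets X r = {S. S \<subseteq> X \<and> card S = r}"

definition batch_greedy :: "'a set \<Rightarrow> ('a set \<Rightarrow> real) \<Rightarrow> nat \<Rightarrow> nat \<Rightarrow> (nat \<Rightarrow> 'a set) \<Rightarrow> bool" where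
  "batch_greedy V f r t T \<longleftrightarrow> T 0 = {} \<and>
     (\<forall>i\<in>{1..t}. \<exists>S \<in> r_subsets (V - T (i - 1)) r.
        T i = T (i - 1) \<union> S \<and>
        (\<forall>S' \<in> r_subsets (V - T (i - 1)) r. f (T (i - 1) \<union> S') \<le> f (T (i - 1) \<union> S)))"

end

theory Submission
  imports Defs
begin

lemma superadd_family:
  assumes "finite I" "supermodular_on V f" "f {} = 0"
    and "\<And>h. h \<in> I \<Longrightarrow> A h \<subseteq> V"
    and "\<And>h h'. h \<in> I \<Longrightarrow> h' \<in> I \<Longrightarrow> h \<noteq> h' \<Longrightarrow> A h \<inter> A h' = {}"
  shows "(\<Sum>h\<in>I. f (A h)) \<le> f (\<Union>h\<in>I. A h)"
  using assms
proof (induction I rule: finite_induct)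
  case empty
  then show ?case by simp
next
  case (insert x F)
  have IH: "(\<Sum>h\<in>F. f (A h)) \<le> f (\<Union>h\<in>F. A h)"
    using insert by blast
  have d: "A x \<inter> (\<Union>h\<in>F. A h) = {}" using insert.prems(4) insert.hyps(2) by fastforce
  have "A x \<subseteq> V" "(\<Union>h\<in>F. A h) \<subseteq> V" using insert.prems(3) by auto
  then have "f (A x) + f (\<Union>h\<in>F. A h) \<le> f (A x \<union> (\<Union>h\<in>F. A h)) + f (A x \<inter> (\<Union>h\<in>F. A h))"
    using insert.prems(1) unfolding supermodular_on_def by blast
  then show ?case using IH d insert.hyps insert.prems(2) by simp
qed

lemma extend_subset:
  assumes "finite X" "Y \<subseteq> X" "card Y \<le> m" "m \<le> card X"
  shows "\<exists>Z. Y \<subseteq> Z \<and> Z \<subseteq> X \<and> card Z = m"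
proof -
  have "card (X - Y) = card X - card Y" using assms by (simp add: card_Diff_subset finite_subset)
  then have "m - card Y \<le> card (X - Y)" using assms by simp
  then obtain W where W: "W \<subseteq> X - Y" "card W = m - card Y"
    using obtain_subset_with_card_n by metis
  have fin: "finite W" "finite Y" using W(1) assms by (auto intro: finite_subset)
  have "card (Y \<union> W) = card Y + card W" using W(1) fin by (subst card_Un_disjoint) auto
  then show ?thesis using W assms by (intro exI[of _ "Y \<union> W"]) auto
qed

theorem lemma2:
  fixes V :: "'a set" and f :: "'a set \<Rightarrow> real" and r k :: nat
    and T U :: "nat \<Rightarrow> 'a set"
  assumes "finite V"
    and "\<And>A. A \<subseteq> V \<Longrightarrow> f A \<ge> 0"
    and "f {} = 0"
    and "supermodular_on V f"
    and "monotone_setfun_on V f"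
    and "1 \<le> r" and "r \<le> k" and "k \<le> card V - 1"
    and "batch_greedy V f r (k div r) T"
    and "\<And>h. h \<in> {1..k div r} \<Longrightarrow> U h \<subseteq> V \<and> card (U h) = r"
    and "\<And>h h'. h \<in> {1..k div r} \<Longrightarrow> h' \<in> {1..k div r} \<Longrightarrow> h \<noteq> h' \<Longrightarrow> U h \<inter> U h' = {}"
  shows "f (T (k div r)) \<ge> (1/2) * (\<Sum>h = 1..k div r. f (U h))"
proof -
  define t where "t = k div r"
  have tr: "t * r \<le> k" unfolding t_def by simp
  have cV: "k < card V" using assms(6,7,8) by linarith
  have T0: "T 0 = {}" using assms(9) unfolding batch_greedy_def by simp
  have step: "\<exists>S \<in> r_subsets (V - T (i - 1)) r. T i = T (i - 1) \<union> S \<and>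
        (\<forall>S' \<in> r_subsets (V - T (i - 1)) r. f (T (i - 1) \<union> S') \<le> f (T (i - 1) \<union> S))"
    if "i \<in> {1..t}" for i
    using assms(9) that unfolding batch_greedy_def t_def by blast
  have inv: "T i \<subseteq> V \<and> card (T i) \<le> i * r" if "i \<le> t" for i
    using that
  proof (induction i)
    case 0
    then show ?case using T0 by simp
  next
    case (Suc j)
    then have IH: "T j \<subseteq> V" "card (T j) \<le> j * r" by auto
    obtain S where S: "S \<in> r_subsets (V - T j) r" "T (Suc j) = T j \<union> S"
      using step[of "Suc j"] Suc.prems by auto
    have "S \<subseteq> V" "card S = r" using S(1) unfolding r_subsets_def by auto
    moreover have "card (T j \<union> S) \<le> card (T j) + card S" by (rule card_Un_le)
    ultimately show ?case using IH S(2) by auto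
  qed
  have mono_step: "T (i - 1) \<subseteq> T i" if "i \<in> {1..t}" for i
    using step[OF that] by auto
  have chain: "T j \<subseteq> T t" if "j \<le> t" for j
    using that
  proof (induction "t - j" arbitrary: j)
    case 0
    then show ?case by simp
  next
    case (Suc x)
    then have "T (Suc j) \<subseteq> T t" by simp
    moreover have "T (Suc j - 1) \<subseteq> T (Suc j)" using mono_step[of "Suc j"] Suc by simp
    ultimately show ?case by simp
  qed
  have Tt: "T t \<subseteq> V" using inv by simp
  have mon: "\<And>A B. A \<subseteq> V \<Longrightarrow> B \<subseteq> A \<Longrightarrow> f B \<le> f A"
    using assms(5) unfolding monotone_setfun_on_def by blast
  have sm: "\<And>A B. A \<subseteq> V \<Longrightarrow> B \<subseteq> V \<Longrightarrow> f A + f B \<le> f (A \<union> B) + f (A \<inter> B)"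
    using assms(4) unfolding supermodular_on_def by blast
  have gain: "f (T i) - f (T (i - 1)) \<ge> f (U i) - f (U i \<inter> T t)" if i: "i \<in> {1..t}" for i
  proof -
    obtain S where S: "S \<in> r_subsets (V - T (i - 1)) r" "T i = T (i - 1) \<union> S"
      "\<forall>S' \<in> r_subsets (V - T (i - 1)) r. f (T (i - 1) \<union> S') \<le> f (T (i - 1) \<union> S)"
      using step[OF i] by blast
    have TV: "T (i - 1) \<subseteq> V" and cT: "card (T (i - 1)) \<le> (i - 1) * r"
    proof -
      have "i - 1 \<le> t" using i by auto
      then show "T (i - 1) \<subseteq> V" "card (T (i - 1)) \<le> (i - 1) * r" using inv by blast+
    qed
    have U: "U i \<subseteq> V" "card (U i) = r" using assms(10) i unfolding t_def by auto
    have "i * r \<le> t * r" using i by simp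
    then have "(i - 1) * r + r \<le> k" using i tr by (cases i) auto
    then have "r \<le> card V - card (T (i - 1))" using cT cV by linarith
    also have "\<dots> = card (V - T (i - 1))" using TV assms(1)
      by (simp add: card_Diff_subset finite_subset)
    finally have r1: "r \<le> card (V - T (i - 1))" .
    have "card (U i - T (i - 1)) \<le> r" using U assms(1)
      by (metis card_mono Diff_subset finite_subset)
    then obtain Z where Z: "U i - T (i - 1) \<subseteq> Z" "Z \<subseteq> V - T (i - 1)" "card Z = r"
      using extend_subset[of "V - T (i - 1)" "U i - T (i - 1)" r] r1 assms(1) U by blast
    have "Z \<in> r_subsets (V - T (i - 1)) r" using Z unfolding r_subsets_def by auto
    then have "f (T (i - 1) \<union> Z) \<le> f (T i)" using S by auto
    moreover have "f (T (i - 1) \<union> U i) \<le> f (T (i - 1) \<union> Z)"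
      using mon[of "T (i - 1) \<union> Z" "T (i - 1) \<union> U i"] Z TV by auto
    moreover have "f (T (i - 1)) + f (U i) \<le> f (T (i - 1) \<union> U i) + f (T (i - 1) \<inter> U i)"
      using sm TV U by blast
    moreover have "f (T (i - 1) \<inter> U i) \<le> f (U i \<inter> T t)"
    proof -
      have "i - 1 \<le> t" using i by auto
      then have "T (i - 1) \<subseteq> T t" by (rule chain)
      then have "T (i - 1) \<inter> U i \<subseteq> U i \<inter> T t" by blast
      moreover have "U i \<inter> T t \<subseteq> V" using U by blast
      ultimately show ?thesis using mon by blast
    qed
    ultimately show ?thesis by linarith
  qed
  have tele: "(\<Sum>i = 1..j. f (T i) - f (T (i - 1))) = f (T j)" for j
    by (induction j) (auto simp: T0 assms(3))
  have "(\<Sum>i = 1..t. f (U i) - f (U i \<inter> T t)) \<le> (\<Sum>i = 1..t. f (T i) - f (T (i - 1)))"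
    by (rule sum_mono) (rule gain)
  also have "\<dots> = f (T t)" by (rule tele)
  finally have A: "(\<Sum>i = 1..t. f (U i)) - (\<Sum>i = 1..t. f (U i \<inter> T t)) \<le> f (T t)"
    by (simp add: sum_subtractf)
  have "(\<Sum>i = 1..t. f (U i \<inter> T t)) \<le> f (\<Union>i\<in>{1..t}. U i \<inter> T t)"
    by (rule superadd_family[OF _ assms(4) assms(3)]) (use Tt assms(11) t_def in auto)
  also have "\<dots> \<le> f (T t)" using mon Tt by auto
  finally show ?thesis using A unfolding t_def by simp
qed

end
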